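(* Let $a:[0,1]\to[0,\infty)$ be a bounded measurable function (so $a\in L^\infty(0,1)$ and $a\ge 0$). There exist constants $T_0>0$ and $\kappa_0>0$, independent of $N$ (equivalently of $h=1/(N+1)$), such that for every integer $N\ge1$, every $T>T_0$ and all $U^0_h,U^1_h\in\mathbb{C}^N$, the solution $U_h=[u_j]_{1\le j\le N}$ of $$M_hU_h''(t)+K_hU_h(t)+L_hU_h(t)=0\quad (t\in(0,T)),\qquad U_h(0)=U_h^0,\ U_h'(0)=U_h^1,$$ satisfies $$\int_0^T\left(\left|\frac{u_1(t)}{h}\right|^2+\left|\frac{u_1'(t)}{2}\right|^2\right)dt\ \ge\ \kappa_0\left(\|U_h^0\|_1^2+\|U_h^1\|_M^2\right).$$
   Context: For an integer $N\ge1$ let $h=1/(N+1)$ and $x_j=jh$, $0\le j\le N+1$; set $a_j=a(x_j)$. Define the $N\times N$ real matrices $K_h=\frac1h\,\mathrm{tridiag}(-1,2,-1)$ (diagonal entries $2/h$, entries $-1/h$ on the first sub- and super-diagonals, zero elsewhere), $M_h=\frac h4\,\mathrm{tridiag}(1,2,1)$ (diagonal $h/2$, off-diagonal neighbours $h/4$), and $L_h=h\,\mathrm{diag}(a_1,\dots,a_N)$. On $\mathbb{C}^N$ let $\langle U,W\rangle=\sum_j u_j\overline{w_j}$ be the canonical inner product, and define $\langle U,W\rangle_1=\langle (K_h+L_h)U,W\rangle$ and $\langle U,W\rangle_M=\langle M_hU,W\rangle$, with associated norms $\|\cdot\|_1$, $\|\cdot\|_M$. *)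

theory Defs
  imports "HOL-Analysis.Analysis"
begin

text \<open>Vectors in C^N are functions nat => complex, only the entries 1..N matter.
  Matrices are functions nat => nat => real, with indices 1..N.\<close>

definition mesh :: "nat \<Rightarrow> real" where
  "mesh N = 1 / (real N + 1)"

definition K_h :: "nat \<Rightarrow> nat \<Rightarrow> nat \<Rightarrow> real" where
  "K_h N i j = (if i = j then 2 / mesh N
                else if i = j + 1 \<or> j = i + 1 then - 1 / mesh N else 0)"

definition M_h :: "nat \<Rightarrow> nat \<Rightarrow> nat \<Rightarrow> real" where
  "M_h N i j = (if i = j then mesh N / 2
                else if i = j + 1 \<or> j = i + 1 then mesh N / 4 else 0)"

definition L_h :: "(real \<Rightarrow> real) \<Rightarrow> nat \<Rightarrow> nat \<Rightarrow> nat \<Rightarrow> real" where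
  "L_h a N i j = (if i = j then mesh N * a (real i * mesh N) else 0)"

definition matvec :: "nat \<Rightarrow> (nat \<Rightarrow> nat \<Rightarrow> real) \<Rightarrow> (nat \<Rightarrow> complex) \<Rightarrow> nat \<Rightarrow> complex" where
  "matvec N A U i = (\<Sum>j = 1..N. complex_of_real (A i j) * U j)"

definition cinner :: "nat \<Rightarrow> (nat \<Rightarrow> complex) \<Rightarrow> (nat \<Rightarrow> complex) \<Rightarrow> complex" where
  "cinner N U W = (\<Sum>j = 1..N. U j * cnj (W j))"

definition norm1_sq :: "(real \<Rightarrow> real) \<Rightarrow> nat \<Rightarrow> (nat \<Rightarrow> complex) \<Rightarrow> real" where
  "norm1_sq a N U = Re (cinner N (matvec N (\<lambda>i j. K_h N i j + L_h a N i j) U) U)"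

definition normM_sq :: "nat \<Rightarrow> (nat \<Rightarrow> complex) \<Rightarrow> real" where
  "normM_sq N U = Re (cinner N (matvec N (M_h N) U) U)"

end

theory Submission
  imports Defs
begin

definition ext :: "nat \<Rightarrow> (nat \<Rightarrow> complex) \<Rightarrow> nat \<Rightarrow> complex" where
  "ext N X k = (if 1 \<le> k \<and> k \<le> N then X k else 0)"

lemma mesh_pos: "mesh N > 0" by (simp add: mesh_def)

lemma matvec_ext: "matvec N A X i = matvec N A (ext N X) i"
  unfolding matvec_def ext_def by (rule sum.cong) auto

lemma matvec_K:
  assumes "1 \<le> i" "i \<le> N"
  shows "matvec N (K_h N) X i = (1 / mesh N) *\<^sub>R (2 *\<^sub>R ext N X i - ext N X (i - 1) - ext N X (i + 1))"
proof -
  let ?h = "mesh N" let ?Y = "ext N X"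
  have "matvec N (K_h N) X i = (\<Sum>j = 1..N. complex_of_real (K_h N i j) * ?Y j)"
    by (subst matvec_ext) (simp add: matvec_def)
  also have "\<dots> = (\<Sum>j = 1..N. (if j = i then (2 / ?h) *\<^sub>R ?Y j else 0)
      + (if j = i - 1 then (-1 / ?h) *\<^sub>R ?Y j else 0) + (if j = i + 1 then (-1 / ?h) *\<^sub>R ?Y j else 0))"
    using assms by (intro sum.cong) (auto simp: K_h_def scaleR_conv_of_real)
  also have "\<dots> = (2 / ?h) *\<^sub>R ?Y i + (-1 / ?h) *\<^sub>R ?Y (i - 1) + (-1 / ?h) *\<^sub>R ?Y (i + 1)"
    using assms by (simp add: sum.distrib ext_def)
  finally show ?thesis by (simp add: algebra_simps divide_simps)
qed

lemma matvec_M: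
  assumes "1 \<le> i" "i \<le> N"
  shows "matvec N (M_h N) X i = (mesh N / 4) *\<^sub>R (ext N X (i - 1) + 2 *\<^sub>R ext N X i + ext N X (i + 1))"
proof -
  let ?h = "mesh N" let ?Y = "ext N X"
  have "matvec N (M_h N) X i = (\<Sum>j = 1..N. complex_of_real (M_h N i j) * ?Y j)"
    by (subst matvec_ext) (simp add: matvec_def)
  also have "\<dots> = (\<Sum>j = 1..N. (if j = i then (?h / 2) *\<^sub>R ?Y j else 0)
      + (if j = i - 1 then (?h / 4) *\<^sub>R ?Y j else 0) + (if j = i + 1 then (?h / 4) *\<^sub>R ?Y j else 0))"
    using assms by (intro sum.cong) (auto simp: M_h_def scaleR_conv_of_real)
  also have "\<dots> = (?h / 2) *\<^sub>R ?Y i + (?h / 4) *\<^sub>R ?Y (i - 1) + (?h / 4) *\<^sub>R ?Y (i + 1)"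
    using assms by (simp add: sum.distrib ext_def)
  finally show ?thesis by (simp add: algebra_simps divide_simps)
qed

lemma matvec_L:
  assumes "1 \<le> i" "i \<le> N"
  shows "matvec N (L_h a N) X i = (mesh N * a (real i * mesh N)) *\<^sub>R ext N X i"
proof -
  have "matvec N (L_h a N) X i = (\<Sum>j = 1..N. (if j = i then (mesh N * a (real i * mesh N)) *\<^sub>R ext N X j else 0))"
    by (subst matvec_ext, unfold matvec_def, rule sum.cong) (auto simp: L_h_def scaleR_conv_of_real)
  also have "\<dots> = (mesh N * a (real i * mesh N)) *\<^sub>R ext N X i" using assms by (simp add: ext_def)
  finally show ?thesis .
qed

lemma sbp_K:
  fixes X Y :: "nat \<Rightarrow> 'a::real_inner"
  assumes "Y 0 = 0"
  shows "(\<Sum>i = 1..n. (2 *\<^sub>R X i - X (i - 1) - X (i + 1)) \<bullet> Y i)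
       = (\<Sum>k<n. (X (k+1) - X k) \<bullet> (Y (k+1) - Y k)) - (X (n+1) - X n) \<bullet> Y n"
proof (induction n)
  case 0 then show ?case using assms by simp
next
  case (Suc n)
  then show ?case by (simp add: algebra_simps inner_diff_left inner_diff_right)
qed

lemma sbp_K':
  fixes X Y :: "nat \<Rightarrow> 'a::real_inner"
  assumes "Y 0 = 0" "Y (N+1) = 0"
  shows "(\<Sum>i = 1..N. (2 *\<^sub>R X i - X (i - 1) - X (i + 1)) \<bullet> Y i)
       = (\<Sum>k\<le>N. (X (k+1) - X k) \<bullet> (Y (k+1) - Y k))"
  using sbp_K[of Y X N] assms by (simp add: lessThan_Suc_atMost[symmetric] algebra_simps inner_diff_left inner_diff_right)

lemma sbp_M:
  fixes X Y :: "nat \<Rightarrow> 'a::real_inner"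
  assumes "Y 0 = 0"
  shows "(\<Sum>i = 1..n. (X (i - 1) + 2 *\<^sub>R X i + X (i + 1)) \<bullet> Y i)
       = (\<Sum>k<n. (X k + X (k+1)) \<bullet> (Y k + Y (k+1))) + (X n + X (n+1)) \<bullet> Y n"
proof (induction n)
  case 0 then show ?case using assms by simp
next
  case (Suc n)
  then show ?case by (simp add: algebra_simps inner_add_left inner_add_right)
qed

lemma sbp_M':
  fixes X Y :: "nat \<Rightarrow> 'a::real_inner"
  assumes "Y 0 = 0" "Y (N+1) = 0"
  shows "(\<Sum>i = 1..N. (X (i - 1) + 2 *\<^sub>R X i + X (i + 1)) \<bullet> Y i)
       = (\<Sum>k\<le>N. (X k + X (k+1)) \<bullet> (Y k + Y (k+1)))"
  using sbp_M[of Y X N] assms by (simp add: lessThan_Suc_atMost[symmetric])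

lemma sidewise_alg:
  fixes x y z p q r x2 y2 z2 :: "'a::real_inner"
  assumes h: "h > 0"
    and eq: "(h/4) *\<^sub>R (x2 + 2 *\<^sub>R y2 + z2) + (1/h) *\<^sub>R (2 *\<^sub>R y - x - z) + (h*c) *\<^sub>R y = 0"
  shows "((norm ((1/2) *\<^sub>R (q + r)))\<^sup>2 + (norm ((1/h) *\<^sub>R (z - y)))\<^sup>2)
       - ((norm ((1/2) *\<^sub>R (p + q)))\<^sup>2 + (norm ((1/h) *\<^sub>R (y - x)))\<^sup>2)
     = 2*h*(((1/4) *\<^sub>R (x2 + 2 *\<^sub>R y2 + z2)) \<bullet> ((1/(2*h)) *\<^sub>R (z - x))
            + ((1/4) *\<^sub>R (p + 2 *\<^sub>R q + r)) \<bullet> ((1/(2*h)) *\<^sub>R (r - p)))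
       + 2*h*c*(y \<bullet> ((1/(2*h)) *\<^sub>R (z - x)))"
proof -
  have V: "(1/4) *\<^sub>R (x2 + 2 *\<^sub>R y2 + z2) = - (1/h^2) *\<^sub>R (2 *\<^sub>R y - x - z) - c *\<^sub>R y"
  proof -
    have "(1/h) *\<^sub>R ((h/4) *\<^sub>R (x2 + 2 *\<^sub>R y2 + z2) + (1/h) *\<^sub>R (2 *\<^sub>R y - x - z) + (h*c) *\<^sub>R y) = 0"
      using eq by simp
    then show ?thesis using h
      by (simp add: scaleR_add_right power2_eq_square algebra_simps)
  qed
  show ?thesis
    unfolding V power2_norm_eq_inner using h
    by (simp add: inner_add_left inner_add_right inner_diff_left inner_diff_right
        inner_commute power2_eq_square field_simps)
qed

lemma half_sum_sq:
  fixes x y :: "'a::real_inner"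
  shows "(norm ((1/2) *\<^sub>R (x + y)))\<^sup>2 \<le> ((norm x)\<^sup>2 + (norm y)\<^sup>2) / 2"
proof -
  have "0 \<le> (norm (x - y))\<^sup>2" by simp
  then show ?thesis unfolding power2_norm_eq_inner
    by (simp add: inner_add_left inner_add_right inner_diff_left inner_diff_right inner_commute)
qed

lemma inner_young:
  fixes x y :: "'a::real_inner"
  assumes "l > 0"
  shows "\<bar>x \<bullet> y\<bar> \<le> (l * (norm x)\<^sup>2 + (norm y)\<^sup>2 / l) / 2"
proof -
  have "\<bar>x \<bullet> y\<bar> \<le> norm x * norm y" by (rule Cauchy_Schwarz_ineq2)
  moreover have "norm x * norm y \<le> (l * (norm x)\<^sup>2 + (norm y)\<^sup>2 / l) / 2"
  proof -
    have "0 \<le> (l * norm x - norm y)\<^sup>2" by simp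
    then have "2 * l * (norm x * norm y) \<le> l\<^sup>2 * (norm x)\<^sup>2 + (norm y)\<^sup>2"
      by (simp add: power2_eq_square algebra_simps)
    then show ?thesis using assms by (simp add: field_simps power2_eq_square)
  qed
  ultimately show ?thesis by linarith
qed

lemma gronwall:
  fixes Q b :: "nat \<Rightarrow> real"
  assumes h: "0 < h" "h * (real N + 1) \<le> 1" and c: "c \<ge> 0"
    and Qn: "\<And>k. Q k \<ge> 0" and bn: "\<And>k. b k \<ge> 0"
    and step: "\<And>k. 1 \<le> k \<Longrightarrow> k \<le> N \<Longrightarrow>
       Q k \<le> Q (k-1) + b k + h*c*(h*(\<Sum>i<k. Q i)) + (h/2)*(Q (k-1) + Q k)"
  shows "\<And>k. k \<le> N \<Longrightarrow> Q k \<le> exp (2+2*c) * (Q 0 + 2*(\<Sum>j=1..k. b j))"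
proof -
  define \<rho> where "\<rho> = 1 + h*(2+2*c)"
  define M where "M k = \<rho>^k * (Q 0 + 2*(\<Sum>j=1..k. b j))" for k
  have h1: "h \<le> 1"
  proof -
    have "h * 1 \<le> h * (real N + 1)" using h by (intro mult_left_mono) auto
    then show ?thesis using h by linarith
  qed
  have \<rho>1: "\<rho> \<ge> 1" using h c by (simp add: \<rho>_def)
  have Mn: "M k \<ge> 0" for k using \<rho>1 Qn bn by (simp add: M_def sum_nonneg)
  have Mmono: "M k \<le> M (Suc k)" for k
  proof -
    have "\<rho>^k * (Q 0 + 2*(\<Sum>j=1..k. b j)) \<le> \<rho>^(Suc k) * (Q 0 + 2*(\<Sum>j=1..k. b j))"
      using \<rho>1 Qn bn by (intro mult_right_mono) (auto simp: sum_nonneg)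
    also have "\<dots> \<le> \<rho>^(Suc k) * (Q 0 + 2*(\<Sum>j=1..Suc k. b j))"
      using \<rho>1 bn by (intro mult_left_mono) auto
    finally show ?thesis by (simp add: M_def)
  qed
  have claim: "k \<le> N \<Longrightarrow> (\<forall>i\<le>k. Q i \<le> M k)" for k
  proof (induction k)
    case 0 then show ?case by (simp add: M_def)
  next
    case (Suc k)
    then have IH: "\<forall>i\<le>k. Q i \<le> M k" by simp
    have sumle: "h*(\<Sum>i<Suc k. Q i) \<le> M k"
    proof -
      have "(\<Sum>i<Suc k. Q i) \<le> (\<Sum>i<Suc k. M k)" using IH by (intro sum_mono) auto
      then have "h*(\<Sum>i<Suc k. Q i) \<le> h * (real (Suc k) * M k)" using h by simp
      also have "\<dots> = (h * real (Suc k)) * M k" by simp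
      also have "\<dots> \<le> 1 * M k"
      proof (rule mult_right_mono)
        have "h * real (Suc k) \<le> h * (real N + 1)" using h Suc.prems by (intro mult_left_mono) auto
        then show "h * real (Suc k) \<le> 1" using h by linarith
      qed (rule Mn)
      finally show ?thesis by simp
    qed
    have st: "Q (Suc k) \<le> Q k + b (Suc k) + h*c*(h*(\<Sum>i<Suc k. Q i)) + (h/2)*(Q k + Q (Suc k))"
      using step[of "Suc k"] Suc.prems by simp
    have Qk: "Q k \<le> M k" using IH by simp
    have A: "(1 - h/2) * Q (Suc k) \<le> (1 + h/2 + h*c) * M k + b (Suc k)"
    proof -
      have "h*c*(h*(\<Sum>i<Suc k. Q i)) \<le> h*c*M k" using sumle h c by (intro mult_left_mono) auto
      moreover have "(1 + h/2) * Q k \<le> (1 + h/2) * M k" using Qk h by (intro mult_left_mono) auto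
      ultimately show ?thesis using st by (simp add: algebra_simps)
    qed
    have B: "(1 + h/2 + h*c) * M k \<le> (1 - h/2) * (\<rho> * M k)"
    proof -
      have "(1 + h/2 + h*c) \<le> (1 - h/2) * \<rho>"
      proof -
        have "h*h*(1+c) \<le> h*(1+c)" using h1 h c by (intro mult_right_mono) auto
        then show ?thesis by (simp add: \<rho>_def algebra_simps)
      qed
      then show ?thesis using Mn by (metis mult.assoc mult_right_mono)
    qed
    have C: "b (Suc k) \<le> (1 - h/2) * (2 * b (Suc k))"
    proof -
      have "h * b (Suc k) \<le> 1 * b (Suc k)" using bn[of "Suc k"] h1 by (intro mult_right_mono) auto
      then show ?thesis by (simp add: algebra_simps)
    qed
    have D: "Q (Suc k) \<le> \<rho> * M k + 2 * b (Suc k)"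
    proof -
      have "(1 - h/2) * Q (Suc k) \<le> (1 - h/2) * (\<rho> * M k + 2 * b (Suc k))"
        using A B C by (simp add: algebra_simps)
      moreover have "1 - h/2 > 0" using h1 by simp
      ultimately show ?thesis by simp
    qed
    have E: "\<rho> * M k + 2 * b (Suc k) \<le> M (Suc k)"
    proof -
      have "1 * (2 * b (Suc k)) \<le> \<rho>^(Suc k) * (2 * b (Suc k))"
        using bn[of "Suc k"] \<rho>1 by (intro mult_right_mono one_le_power) auto
      then show ?thesis by (simp add: M_def algebra_simps)
    qed
    show ?case
    proof (intro allI impI)
      fix i assume "i \<le> Suc k"
      then consider "i \<le> k" | "i = Suc k" by linarith
      then show "Q i \<le> M (Suc k)"
      proof cases
        case 1 then show ?thesis using IH Mmono[of k] by force
      next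
        case 2 then show ?thesis using D E by simp
      qed
    qed
  qed
  fix k assume k: "k \<le> N"
  have "Q k \<le> M k" using claim[OF k] by simp
  also have "\<dots> \<le> exp (2+2*c) * (Q 0 + 2*(\<Sum>j=1..k. b j))"
  proof -
    have "\<rho>^k \<le> exp (h*(2+2*c))^k"
      using \<rho>1 by (intro power_mono) (auto simp: \<rho>_def exp_ge_add_one_self_aux add.commute)
    also have "\<dots> = exp (real k * h * (2+2*c))" by (simp add: exp_of_nat_mult[symmetric] mult.assoc)
    also have "\<dots> \<le> exp (2+2*c)"
    proof -
      have "h * real k \<le> h * (real N + 1)" using h k by (intro mult_left_mono) auto
      then have "real k * h \<le> 1" using h(2) by (metis mult.commute order_trans)
      then have "real k * h * (2+2*c) \<le> 1 * (2+2*c)" using c by (intro mult_right_mono) auto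
      then show ?thesis by simp
    qed
    finally show ?thesis using Qn bn unfolding M_def by (intro mult_right_mono) (auto simp: sum_nonneg)
  qed
  finally show "Q k \<le> exp (2+2*c) * (Q 0 + 2*(\<Sum>j=1..k. b j))" .
qed

lemma vd_scale:
  "(f has_vector_derivative f') F \<Longrightarrow> ((\<lambda>x. c *\<^sub>R f x) has_vector_derivative (c *\<^sub>R f')) F"
  by (rule bounded_linear.has_vector_derivative[OF bounded_linear_scaleR_right])

lemma vd_inner:
  "(f has_vector_derivative f') (at x within s) \<Longrightarrow> (g has_vector_derivative g') (at x within s) \<Longrightarrow>
   ((\<lambda>x. f x \<bullet> g x) has_vector_derivative (f x \<bullet> g' + f' \<bullet> g x)) (at x within s)"
  by (rule bounded_bilinear.has_vector_derivative[OF bounded_bilinear_inner])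

lemma Re_mult_cnj: "Re (z * cnj w) = z \<bullet> w"
  by (simp add: inner_complex_def)

locale sol =
  fixes a :: "real \<Rightarrow> real" and B :: real and N :: nat and T :: real
    and u u' u'' :: "nat \<Rightarrow> real \<Rightarrow> complex"
  assumes N1: "N \<ge> 1" and Tpos: "T > 0" and B0: "B \<ge> 0"
    and abdd: "\<forall>x\<in>{0..1}. a x \<le> B" and anonneg: "\<forall>x\<in>{0..1}. 0 \<le> a x"
    and der: "\<forall>j\<in>{1..N}. \<forall>t\<in>{0..T}.
          (u j has_vector_derivative u' j t) (at t within {0..T}) \<and>
          (u' j has_vector_derivative u'' j t) (at t within {0..T})"
    and eq: "\<forall>t\<in>{0<..<T}. \<forall>i\<in>{1..N}.
          matvec N (M_h N) (\<lambda>j. u'' j t) i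
          + matvec N (K_h N) (\<lambda>j. u j t) i
          + matvec N (L_h a N) (\<lambda>j. u j t) i = 0"
begin

definition "h = mesh N"
definition "U k t = ext N (\<lambda>j. u j t) k"
definition "U1 k t = ext N (\<lambda>j. u' j t) k"
definition "U2 k t = ext N (\<lambda>j. u'' j t) k"
definition "ak k = a (real k * h)"
definition "vv k t = (1/2) *\<^sub>R (U1 k t + U1 (Suc k) t)"
definition "ww k t = (1/h) *\<^sub>R (U (Suc k) t - U k t)"
definition "e k t = (norm (vv k t))\<^sup>2 + (norm (ww k t))\<^sup>2"
definition "W k t = (1/(2*h)) *\<^sub>R (U (k+1) t - U (k-1) t)"
definition "Wp k t = (1/(2*h)) *\<^sub>R (U1 (k+1) t - U1 (k-1) t)"
definition "Vp k t = (1/4) *\<^sub>R (U1 (k-1) t + 2 *\<^sub>R U1 k t + U1 (k+1) t)"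
definition "Vpp k t = (1/4) *\<^sub>R (U2 (k-1) t + 2 *\<^sub>R U2 k t + U2 (k+1) t)"
definition "D k t = Vp k t \<bullet> W k t"
definition "S t = h * (\<Sum>k\<le>N. e k t)"
definition "P t = h * (\<Sum>k=1..N. ak k * (norm (U k t))\<^sup>2)"
definition "E t = S t + P t"

lemma h_pos: "h > 0" by (simp add: h_def mesh_pos)
lemma hN: "h * (real N + 1) = 1" by (simp add: h_def mesh_def)
lemma hN': "h * real N \<le> 1" using hN h_pos by (simp add: algebra_simps)

lemma ak_bounds: "1 \<le> k \<Longrightarrow> k \<le> N \<Longrightarrow> 0 \<le> ak k \<and> ak k \<le> B"
proof -
  assume k: "1 \<le> k" "k \<le> N"
  have "real k * h \<le> real N * h" using k h_pos by (intro mult_right_mono) auto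
  moreover have "real N * h \<le> 1" using hN' by (simp add: mult.commute)
  moreover have "0 \<le> real k * h" using h_pos by simp
  ultimately have "real k * h \<in> {0..1}" by simp
  then show ?thesis using abdd anonneg by (simp add: ak_def)
qed

lemma U0[simp]: "U 0 t = 0" "U1 0 t = 0" "U2 0 t = 0"
  by (simp_all add: U_def U1_def U2_def ext_def)
lemma UN[simp]: "U (Suc N) t = 0" "U1 (Suc N) t = 0" "U2 (Suc N) t = 0"
  by (simp_all add: U_def U1_def U2_def ext_def)

lemma Ufun: "U k = (if 1 \<le> k \<and> k \<le> N then u k else (\<lambda>_. 0))"
  by (auto simp: U_def ext_def fun_eq_iff)
lemma U1fun: "U1 k = (if 1 \<le> k \<and> k \<le> N then u' k else (\<lambda>_. 0))"
  by (auto simp: U1_def ext_def fun_eq_iff)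

lemma derU: "t \<in> {0..T} \<Longrightarrow> (U k has_vector_derivative U1 k t) (at t within {0..T})"
  using der by (cases "1 \<le> k \<and> k \<le> N") (auto simp: Ufun U1_def ext_def)
lemma derU1: "t \<in> {0..T} \<Longrightarrow> (U1 k has_vector_derivative U2 k t) (at t within {0..T})"
  using der by (cases "1 \<le> k \<and> k \<le> N") (auto simp: U1fun U2_def ext_def)

lemma contU: "continuous_on {0..T} (U k)"
  by (rule continuous_on_vector_derivative) (rule derU)
lemma contU1: "continuous_on {0..T} (U1 k)"
  by (rule continuous_on_vector_derivative) (rule derU1)

lemma node_eq:
  assumes t: "t \<in> {0<..<T}" and k: "1 \<le> k" "k \<le> N"
  shows "(h/4) *\<^sub>R (U2 (k-1) t + 2 *\<^sub>R U2 k t + U2 (k+1) t)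
       + (1/h) *\<^sub>R (2 *\<^sub>R U k t - U (k-1) t - U (k+1) t) + (h * ak k) *\<^sub>R U k t = 0"
proof -
  have "matvec N (M_h N) (\<lambda>j. u'' j t) k + matvec N (K_h N) (\<lambda>j. u j t) k
          + matvec N (L_h a N) (\<lambda>j. u j t) k = 0" using eq t k by auto
  then show ?thesis
    using k by (simp add: matvec_K matvec_M matvec_L U_def U2_def h_def ak_def)
qed

lemma sidewise:
  assumes t: "t \<in> {0<..<T}" and k: "1 \<le> k" "k \<le> N"
  shows "e k t - e (k-1) t = 2*h*(Vpp k t \<bullet> W k t + Vp k t \<bullet> Wp k t) + 2*h*ak k*(U k t \<bullet> W k t)"
proof -
  have sk: "Suc (k-1) = k" using k by simp
  show ?thesis
    using sidewise_alg[OF h_pos node_eq[OF t k], where p="U1 (k-1) t" and q="U1 k t" and r="U1 (k+1) t"]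
    unfolding e_def vv_def ww_def Vpp_def Vp_def W_def Wp_def sk by simp
qed

lemma derVp: "t \<in> {0..T} \<Longrightarrow> (Vp k has_vector_derivative Vpp k t) (at t within {0..T})"
  unfolding Vp_def[abs_def] Vpp_def by (intro vd_scale has_vector_derivative_add derU1)
lemma derW: "t \<in> {0..T} \<Longrightarrow> (W k has_vector_derivative Wp k t) (at t within {0..T})"
  unfolding W_def[abs_def] Wp_def by (intro vd_scale has_vector_derivative_diff derU)
lemma derD: "t \<in> {0..T} \<Longrightarrow> (D k has_vector_derivative (Vp k t \<bullet> Wp k t + Vpp k t \<bullet> W k t)) (at t within {0..T})"
  unfolding D_def[abs_def] by (intro vd_inner derVp derW)

lemma contD: "continuous_on {0..T} (D k)"
  by (rule continuous_on_vector_derivative) (rule derD)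

lemma conte: "continuous_on {0..T} (e k)"
  unfolding e_def[abs_def] vv_def ww_def
  by (intro continuous_on_add continuous_on_power continuous_on_norm continuous_on_scaleR continuous_on_const continuous_on_diff contU contU1)

lemma contR: "continuous_on {0..T} (\<lambda>t. U k t \<bullet> W k t)"
  unfolding W_def by (intro continuous_on_inner continuous_on_scaleR continuous_on_const continuous_on_diff contU)

lemma ftc_D:
  assumes k: "1 \<le> k" "k \<le> N"
  shows "((\<lambda>t. (e k t - e (k-1) t - 2*h*ak k*(U k t \<bullet> W k t)) / (2*h)) has_integral (D k T - D k 0)) {0..T}"
proof (rule fundamental_theorem_of_calculus_interior)
  show "0 \<le> T" using Tpos by simp
  show "continuous_on {0..T} (D k)" by (rule contD)
  fix x assume x: "x \<in> {0<..<T}"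
  have "(D k has_vector_derivative (Vp k x \<bullet> Wp k x + Vpp k x \<bullet> W k x)) (at x)"
    using derD[of x k] x at_within_Icc_at[of 0 x T] by auto
  moreover have "Vp k x \<bullet> Wp k x + Vpp k x \<bullet> W k x = (e k x - e (k-1) x - 2*h*ak k*(U k x \<bullet> W k x)) / (2*h)"
    using sidewise[OF x k] h_pos by (simp add: field_simps)
  ultimately show "(D k has_vector_derivative (e k x - e (k-1) x - 2*h*ak k*(U k x \<bullet> W k x)) / (2*h)) (at x)"
    by simp
qed

definition "Q k = integral {0..T} (e k)"
definition "RR k = integral {0..T} (\<lambda>t. U k t \<bullet> W k t)"

lemma int_e: "(e k has_integral Q k) {0..T}"
  unfolding Q_def by (intro integrable_integral integrable_continuous_interval conte)
lemma int_R: "((\<lambda>t. U k t \<bullet> W k t) has_integral RR k) {0..T}"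
  unfolding RR_def by (intro integrable_integral integrable_continuous_interval contR)

lemma Q_id:
  assumes k: "1 \<le> k" "k \<le> N"
  shows "Q k - Q (k-1) - 2*h*ak k*RR k = 2*h*(D k T - D k 0)"
proof -
  have 1: "((\<lambda>t. (2*h) *\<^sub>R ((e k t - e (k-1) t - 2*h*ak k*(U k t \<bullet> W k t)) / (2*h))) has_integral (2*h) *\<^sub>R (D k T - D k 0)) {0..T}"
    by (intro has_integral_cmul ftc_D k)
  have 2: "((\<lambda>t. e k t - e (k-1) t - (2*h*ak k) *\<^sub>R (U k t \<bullet> W k t)) has_integral (Q k - Q (k-1) - (2*h*ak k) *\<^sub>R RR k)) {0..T}"
    by (intro has_integral_diff int_e has_integral_cmul int_R)
  have fe: "(\<lambda>t. (2*h) *\<^sub>R ((e k t - e (k-1) t - 2*h*ak k*(U k t \<bullet> W k t)) / (2*h)))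
      = (\<lambda>t. e k t - e (k-1) t - (2*h*ak k) *\<^sub>R (U k t \<bullet> W k t))"
  proof
    fix t
    have "h \<noteq> 0" using h_pos by simp
    then show "(2*h) *\<^sub>R ((e k t - e (k-1) t - 2*h*ak k*(U k t \<bullet> W k t)) / (2*h))
      = e k t - e (k-1) t - (2*h*ak k) *\<^sub>R (U k t \<bullet> W k t)" by simp
  qed
  have 3: "((\<lambda>t. e k t - e (k-1) t - (2*h*ak k) *\<^sub>R (U k t \<bullet> W k t)) has_integral (2*h) *\<^sub>R (D k T - D k 0)) {0..T}"
    using 1 unfolding fe .
  have "(2*h) *\<^sub>R (D k T - D k 0) = Q k - Q (k-1) - (2*h*ak k) *\<^sub>R RR k"
    by (rule has_integral_unique[OF 3 2])
  then show ?thesis by simp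
qed


end

context sol begin

lemma e_nonneg: "e k t \<ge> 0" by (simp add: e_def)
lemma S_nonneg: "S t \<ge> 0" using h_pos by (simp add: S_def e_nonneg sum_nonneg)

lemma Vp_split: "1 \<le> k \<Longrightarrow> Vp k t = (1/2) *\<^sub>R (vv (k-1) t + vv k t)"
  by (simp add: Vp_def vv_def algebra_simps)
lemma W_split: "1 \<le> k \<Longrightarrow> W k t = (1/2) *\<^sub>R (ww (k-1) t + ww k t)"
  using h_pos by (simp add: W_def ww_def algebra_simps)

lemma Vp_sq: "1 \<le> k \<Longrightarrow> (norm (Vp k t))\<^sup>2 \<le> ((norm (vv (k-1) t))\<^sup>2 + (norm (vv k t))\<^sup>2) / 2"
  using half_sum_sq Vp_split by metis
lemma W_sq: "1 \<le> k \<Longrightarrow> (norm (W k t))\<^sup>2 \<le> ((norm (ww (k-1) t))\<^sup>2 + (norm (ww k t))\<^sup>2) / 2"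
  using half_sum_sq W_split by metis

lemma W_sq_e: "1 \<le> k \<Longrightarrow> (norm (W k t))\<^sup>2 \<le> (e (k-1) t + e k t) / 2"
proof -
  assume k: "1 \<le> k"
  have "(norm (ww (k-1) t))\<^sup>2 + (norm (ww k t))\<^sup>2 \<le> e (k-1) t + e k t"
    unfolding e_def by (intro add_mono) auto
  then have "((norm (ww (k-1) t))\<^sup>2 + (norm (ww k t))\<^sup>2) / 2 \<le> (e (k-1) t + e k t) / 2"
    by (rule divide_right_mono) simp
  then show ?thesis using W_sq[OF k, of t] by linarith
qed

lemma bound_D: "1 \<le> k \<Longrightarrow> 2*h*\<bar>D k t\<bar> \<le> (h/2)*(e (k-1) t + e k t)"
proof -
  assume k: "1 \<le> k"
  have "\<bar>D k t\<bar> \<le> (1 * (norm (Vp k t))\<^sup>2 + (norm (W k t))\<^sup>2 / 1) / 2"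
    unfolding D_def by (rule inner_young) simp
  also have "\<dots> \<le> (e (k-1) t + e k t) / 4"
    using Vp_sq[OF k, of t] W_sq[OF k, of t] by (simp add: e_def)
  finally have "\<bar>D k t\<bar> \<le> (e (k-1) t + e k t) / 4" .
  then have "2*h*\<bar>D k t\<bar> \<le> 2*h*((e (k-1) t + e k t) / 4)" using h_pos by simp
  then show ?thesis by simp
qed

lemma bound_R:
  assumes k: "1 \<le> k" "k \<le> N"
  shows "2*h*ak k*(U k t \<bullet> W k t) \<le> h*(B*(1+B))*(norm (U k t))\<^sup>2 + (h/2)*(e (k-1) t + e k t)"
proof -
  have a: "0 \<le> ak k" "ak k \<le> B" using ak_bounds[OF k] by auto
  have y: "\<bar>U k t \<bullet> W k t\<bar> \<le> ((1+B) * (norm (U k t))\<^sup>2 + (norm (W k t))\<^sup>2 / (1+B)) / 2"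
    using B0 by (intro inner_young) simp
  have "2*h*ak k*(U k t \<bullet> W k t) \<le> 2*h*ak k*\<bar>U k t \<bullet> W k t\<bar>"
    using a h_pos by (intro mult_left_mono) auto
  also have "\<dots> \<le> 2*h*B*\<bar>U k t \<bullet> W k t\<bar>"
    using a h_pos by (intro mult_right_mono mult_left_mono) auto
  also have "\<dots> \<le> 2*h*B*(((1+B) * (norm (U k t))\<^sup>2 + (norm (W k t))\<^sup>2 / (1+B)) / 2)"
    using y h_pos B0 by (intro mult_left_mono) auto
  also have "\<dots> = h*(B*(1+B))*(norm (U k t))\<^sup>2 + h*(B/(1+B))*(norm (W k t))\<^sup>2"
    using B0 by (simp add: field_simps)
  also have "\<dots> \<le> h*(B*(1+B))*(norm (U k t))\<^sup>2 + h*1*((e (k-1) t + e k t) / 2)"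
  proof -
    have "B/(1+B) \<le> 1" using B0 by simp
    moreover have "0 \<le> B/(1+B)" using B0 by simp
    ultimately have "(B/(1+B))*(norm (W k t))\<^sup>2 \<le> 1*((e (k-1) t + e k t) / 2)"
      using W_sq_e[OF k(1), of t] by (intro mult_mono) auto
    then have "h*((B/(1+B))*(norm (W k t))\<^sup>2) \<le> h*(1*((e (k-1) t + e k t) / 2))"
      using h_pos by (intro mult_left_mono) auto
    then show ?thesis unfolding mult.assoc by linarith
  qed
  finally show ?thesis by simp
qed

lemma bound_U:
  assumes k: "k \<le> N + 1"
  shows "(norm (U k t))\<^sup>2 \<le> h * (\<Sum>i<k. e i t)"
proof -
  have "U k t = (\<Sum>i<k. U (Suc i) t - U i t)" using sum_lessThan_telescope[of "\<lambda>i. U i t" k] by simp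
  also have "\<dots> = (\<Sum>i<k. h *\<^sub>R ww i t)" using h_pos by (simp add: ww_def)
  finally have "norm (U k t) \<le> (\<Sum>i<k. h * norm (ww i t))"
    using h_pos by (metis (no_types, lifting) norm_scaleR norm_sum abs_of_pos sum.cong)
  then have "(norm (U k t))\<^sup>2 \<le> (\<Sum>i<k. h * norm (ww i t))\<^sup>2"
    by (intro power_mono) auto
  also have "\<dots> \<le> (\<Sum>i<k. (h * norm (ww i t))\<^sup>2) * card {..<k}"
    by (rule sum_squared_le_sum_of_squares)
  also have "\<dots> = (h * real k) * (h * (\<Sum>i<k. (norm (ww i t))\<^sup>2))"
    by (simp add: power_mult_distrib sum_distrib_left mult_ac power2_eq_square)
  also have "\<dots> \<le> 1 * (h * (\<Sum>i<k. (norm (ww i t))\<^sup>2))"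
  proof (rule mult_right_mono)
    have "h * real k \<le> h * (real N + 1)" using k h_pos by (intro mult_left_mono) auto
    then show "h * real k \<le> 1" using hN by simp
  qed (use h_pos in \<open>auto intro!: sum_nonneg mult_nonneg_nonneg\<close>)
  also have "\<dots> \<le> h * (\<Sum>i<k. e i t)"
    using h_pos by (auto intro!: mult_left_mono sum_mono simp: e_def)
  finally show ?thesis .
qed

lemma P_nonneg: "0 \<le> P t"
  unfolding P_def using h_pos ak_bounds by (auto intro!: mult_nonneg_nonneg sum_nonneg)

lemma P_le: "P t \<le> B * S t"
proof -
  have "(\<Sum>k=1..N. ak k * (norm (U k t))\<^sup>2) \<le> (\<Sum>k=1..N. B * (h * (\<Sum>i\<le>N. e i t)))"
  proof (rule sum_mono)
    fix k assume k: "k \<in> {1..N}"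
    have "ak k * (norm (U k t))\<^sup>2 \<le> B * (norm (U k t))\<^sup>2"
      using ak_bounds[of k] k by (intro mult_right_mono) auto
    also have "\<dots> \<le> B * (h * (\<Sum>i<k. e i t))"
      using bound_U[of k t] k B0 by (intro mult_left_mono) auto
    also have "\<dots> \<le> B * (h * (\<Sum>i\<le>N. e i t))"
      using k B0 h_pos e_nonneg
      by (intro mult_left_mono sum_mono2) auto
    finally show "ak k * (norm (U k t))\<^sup>2 \<le> B * (h * (\<Sum>i\<le>N. e i t))" .
  qed
  then have "P t \<le> h * (real N * (B * (h * (\<Sum>i\<le>N. e i t))))"
    using h_pos unfolding P_def by (intro mult_left_mono) auto
  also have "\<dots> = (h * real N) * (B * S t)" by (simp add: S_def)
  also have "\<dots> \<le> 1 * (B * S t)"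
    using hN' B0 S_nonneg by (intro mult_right_mono) auto
  finally show ?thesis by simp
qed

lemma sum_b_le: "(\<Sum>k=1..N. (h/2)*(e (k-1) t + e k t)) \<le> S t"
proof -
  have "(\<Sum>k=1..N. e (k-1) t) = (\<Sum>k<N. e k t)"
  proof -
    have "(\<Sum>k=1..N. e (k-1) t) = (\<Sum>k\<in>Suc ` {..<N}. e (k-1) t)"
      by (simp add: atLeast1_atMost_eq_remove0 image_Suc_lessThan)
    also have "\<dots> = (\<Sum>k<N. e k t)" by (subst sum.reindex) auto
    finally show ?thesis .
  qed
  also have "\<dots> \<le> (\<Sum>k\<le>N. e k t)" using e_nonneg by (intro sum_mono2) auto
  finally have 1: "(\<Sum>k=1..N. e (k-1) t) \<le> (\<Sum>k\<le>N. e k t)" .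
  have 2: "(\<Sum>k=1..N. e k t) \<le> (\<Sum>k\<le>N. e k t)" using e_nonneg by (intro sum_mono2) auto
  have "(\<Sum>k=1..N. (h/2)*(e (k-1) t + e k t)) = (h/2)*((\<Sum>k=1..N. e (k-1) t) + (\<Sum>k=1..N. e k t))"
    by (simp only: sum_distrib_left[symmetric] sum.distrib)
  also have "\<dots> \<le> (h/2)*(2*(\<Sum>k\<le>N. e k t))"
    using 1 2 h_pos by (intro mult_left_mono) auto
  finally show ?thesis by (simp add: S_def)
qed

end

context sol begin

definition "vv2 k t = (1/2) *\<^sub>R (U2 k t + U2 (Suc k) t)"
definition "ww1 k t = (1/h) *\<^sub>R (U1 (Suc k) t - U1 k t)"

definition "E' t = h *\<^sub>R (\<Sum>k\<le>N. (vv k t \<bullet> vv2 k t + vv2 k t \<bullet> vv k t) + (ww k t \<bullet> ww1 k t + ww1 k t \<bullet> ww k t))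
   + h *\<^sub>R (\<Sum>k=1..N. ak k *\<^sub>R (U k t \<bullet> U1 k t + U1 k t \<bullet> U k t))"

lemma E_alt: "E = (\<lambda>t. h *\<^sub>R (\<Sum>k\<le>N. vv k t \<bullet> vv k t + ww k t \<bullet> ww k t)
   + h *\<^sub>R (\<Sum>k=1..N. ak k *\<^sub>R (U k t \<bullet> U k t)))"
  by (auto simp: fun_eq_iff E_def S_def P_def e_def power2_norm_eq_inner)

lemma derE: "t \<in> {0..T} \<Longrightarrow> (E has_vector_derivative E' t) (at t within {0..T})"
proof -
  assume t: "t \<in> {0..T}"
  have dvv: "(vv k has_vector_derivative vv2 k t) (at t within {0..T})" for k
    unfolding vv_def[abs_def] vv2_def by (intro vd_scale has_vector_derivative_add derU1 t)
  have dww: "(ww k has_vector_derivative ww1 k t) (at t within {0..T})" for k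
    unfolding ww_def[abs_def] ww1_def by (intro vd_scale has_vector_derivative_diff derU t)
  show ?thesis
    unfolding E_alt E'_def
    by (intro has_vector_derivative_add vd_scale has_vector_derivative_sum vd_inner dvv dww derU t)
qed

lemma E'_zero:
  assumes t: "t \<in> {0<..<T}"
  shows "E' t = 0"
proof -
  have Y0: "U1 0 t = 0" "U1 (N+1) t = 0" by simp_all
  have A: "h*(\<Sum>k\<le>N. vv k t \<bullet> vv2 k t) = (\<Sum>i=1..N. ((h/4) *\<^sub>R (U2 (i-1) t + 2 *\<^sub>R U2 i t + U2 (i+1) t)) \<bullet> U1 i t)"
  proof -
    have "h*(\<Sum>k\<le>N. vv k t \<bullet> vv2 k t) = (h/4)*(\<Sum>k\<le>N. (U2 k t + U2 (k+1) t) \<bullet> (U1 k t + U1 (k+1) t))"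
      by (simp add: vv_def vv2_def sum_distrib_left inner_commute)
    also have "\<dots> = (h/4)*(\<Sum>i=1..N. (U2 (i-1) t + 2 *\<^sub>R U2 i t + U2 (i+1) t) \<bullet> U1 i t)"
      using sbp_M'[of "\<lambda>k. U1 k t" N "\<lambda>k. U2 k t"] Y0 by simp
    finally show ?thesis by (simp add: sum_distrib_left)
  qed
  have Bq: "h*(\<Sum>k\<le>N. ww k t \<bullet> ww1 k t) = (\<Sum>i=1..N. ((1/h) *\<^sub>R (2 *\<^sub>R U i t - U (i-1) t - U (i+1) t)) \<bullet> U1 i t)"
  proof -
    have "h*(\<Sum>k\<le>N. ww k t \<bullet> ww1 k t) = (1/h)*(\<Sum>k\<le>N. (U (k+1) t - U k t) \<bullet> (U1 (k+1) t - U1 k t))"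
      using h_pos by (simp add: ww_def ww1_def sum_distrib_left power2_eq_square)
    also have "\<dots> = (1/h)*(\<Sum>i=1..N. (2 *\<^sub>R U i t - U (i-1) t - U (i+1) t) \<bullet> U1 i t)"
      using sbp_K'[of "\<lambda>k. U1 k t" N "\<lambda>k. U k t"] Y0 by simp
    finally show ?thesis by (simp add: sum_distrib_left)
  qed
  have C: "h*(\<Sum>k=1..N. ak k * (U k t \<bullet> U1 k t)) = (\<Sum>i=1..N. ((h * ak i) *\<^sub>R U i t) \<bullet> U1 i t)"
    by (simp add: sum_distrib_left mult_ac)
  have "E' t = 2 * (h*(\<Sum>k\<le>N. vv k t \<bullet> vv2 k t) + h*(\<Sum>k\<le>N. ww k t \<bullet> ww1 k t)
       + h*(\<Sum>k=1..N. ak k * (U k t \<bullet> U1 k t)))"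
    by (simp add: E'_def inner_commute sum.distrib sum_distrib_left algebra_simps)
  also have "\<dots> = 2 * (\<Sum>i=1..N. ((h/4) *\<^sub>R (U2 (i-1) t + 2 *\<^sub>R U2 i t + U2 (i+1) t)
       + (1/h) *\<^sub>R (2 *\<^sub>R U i t - U (i-1) t - U (i+1) t) + (h * ak i) *\<^sub>R U i t) \<bullet> U1 i t)"
    unfolding A Bq C by (simp add: inner_add_left sum.distrib)
  also have "\<dots> = 0"
    using node_eq[OF t] by (simp add: sum.neutral)
  finally show ?thesis .
qed

lemma E_const:
  assumes t: "t \<in> {0..T}"
  shows "E t = E 0"
proof -
  have "((\<lambda>_. 0::real) has_integral (E t - E 0)) {0..t}"
  proof (rule fundamental_theorem_of_calculus_interior)
    show "0 \<le> t" using t by simp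
    show "continuous_on {0..t} E"
    proof -
      have cE: "continuous_on {0..T} E" by (rule continuous_on_vector_derivative) (rule derE)
      show ?thesis by (rule continuous_on_subset[OF cE]) (use t in auto)
    qed
    fix x assume x: "x \<in> {0<..<t}"
    then have x': "x \<in> {0<..<T}" using t by auto
    have "(E has_vector_derivative E' x) (at x)"
      using derE[of x] x' at_within_Icc_at[of 0 x T] by auto
    then show "(E has_vector_derivative 0) (at x)" using E'_zero[OF x'] by simp
  qed
  then have "E t - E 0 = 0" using has_integral_0 has_integral_unique by blast
  then show ?thesis by simp
qed

end

context sol begin

lemma matvec_KL: "matvec N (\<lambda>i j. K_h N i j + L_h a N i j) X i = matvec N (K_h N) X i + matvec N (L_h a N) X i"
  by (simp add: matvec_def sum.distrib distrib_right)

lemma init_energy: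
  assumes init: "\<forall>j\<in>{1..N}. u j 0 = V0 j \<and> u' j 0 = V1 j"
  shows "norm1_sq a N V0 + normM_sq N V1 = E 0"
proof -
  have e0: "ext N V0 = (\<lambda>k. U k 0)" using init by (auto simp: fun_eq_iff ext_def U_def)
  have e1: "ext N V1 = (\<lambda>k. U1 k 0)" using init by (auto simp: fun_eq_iff ext_def U1_def)
  have n1: "norm1_sq a N V0 = (\<Sum>j=1..N. ((1/h) *\<^sub>R (2 *\<^sub>R U j 0 - U (j-1) 0 - U (j+1) 0)) \<bullet> U j 0)
          + (\<Sum>j=1..N. ((h * ak j) *\<^sub>R U j 0) \<bullet> U j 0)"
  proof -
    have "norm1_sq a N V0 = (\<Sum>j=1..N. matvec N (\<lambda>i j. K_h N i j + L_h a N i j) V0 j \<bullet> V0 j)"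
      by (simp only: norm1_sq_def cinner_def Re_sum Re_mult_cnj)
    also have "\<dots> = (\<Sum>j=1..N. (((1/h) *\<^sub>R (2 *\<^sub>R U j 0 - U (j-1) 0 - U (j+1) 0)) + ((h * ak j) *\<^sub>R U j 0)) \<bullet> U j 0)"
    proof (rule sum.cong)
      fix j assume j: "j \<in> {1..N}"
      then have "V0 j = U j 0" using init by (simp add: U_def ext_def)
      then show "matvec N (\<lambda>i j. K_h N i j + L_h a N i j) V0 j \<bullet> V0 j
        = (((1/h) *\<^sub>R (2 *\<^sub>R U j 0 - U (j-1) 0 - U (j+1) 0)) + ((h * ak j) *\<^sub>R U j 0)) \<bullet> U j 0"
        using j by (simp add: matvec_KL matvec_K matvec_L e0 h_def ak_def)
    qed simp
    finally show ?thesis by (simp add: inner_add_left sum.distrib)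
  qed
  have K: "(\<Sum>j=1..N. ((1/h) *\<^sub>R (2 *\<^sub>R U j 0 - U (j-1) 0 - U (j+1) 0)) \<bullet> U j 0) = h * (\<Sum>k\<le>N. (norm (ww k 0))\<^sup>2)"
  proof -
    have "(\<Sum>j=1..N. ((1/h) *\<^sub>R (2 *\<^sub>R U j 0 - U (j-1) 0 - U (j+1) 0)) \<bullet> U j 0)
        = (1/h) * (\<Sum>j=1..N. (2 *\<^sub>R U j 0 - U (j-1) 0 - U (j+1) 0) \<bullet> U j 0)"
      by (simp add: sum_distrib_left)
    also have "\<dots> = (1/h) * (\<Sum>k\<le>N. (U (k+1) 0 - U k 0) \<bullet> (U (k+1) 0 - U k 0))"
      using sbp_K'[of "\<lambda>k. U k 0" N "\<lambda>k. U k 0"] by simp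
    also have "\<dots> = (\<Sum>k\<le>N. h * (norm (ww k 0))\<^sup>2)"
      unfolding sum_distrib_left
    proof (rule sum.cong)
      fix k
      have "norm (ww k 0) = (1/h) * norm (U (Suc k) 0 - U k 0)"
        using h_pos by (simp add: ww_def)
      then have "h * (norm (ww k 0))\<^sup>2 = (1/h) * (norm (U (Suc k) 0 - U k 0))\<^sup>2"
        using h_pos by (simp add: power2_eq_square)
      then show "(1/h) * ((U (k+1) 0 - U k 0) \<bullet> (U (k+1) 0 - U k 0)) = h * (norm (ww k 0))\<^sup>2"
        by (simp add: power2_norm_eq_inner)
    qed simp
    finally show ?thesis by (simp add: sum_distrib_left)
  qed
  have L: "(\<Sum>j=1..N. ((h * ak j) *\<^sub>R U j 0) \<bullet> U j 0) = P 0"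
    by (simp add: P_def sum_distrib_left power2_norm_eq_inner mult_ac)
  have M: "normM_sq N V1 = h * (\<Sum>k\<le>N. (norm (vv k 0))\<^sup>2)"
  proof -
    have "normM_sq N V1 = (\<Sum>j=1..N. matvec N (M_h N) V1 j \<bullet> V1 j)"
      by (simp only: normM_sq_def cinner_def Re_sum Re_mult_cnj)
    also have "\<dots> = (\<Sum>j=1..N. ((h/4) *\<^sub>R (U1 (j-1) 0 + 2 *\<^sub>R U1 j 0 + U1 (j+1) 0)) \<bullet> U1 j 0)"
    proof (rule sum.cong)
      fix j assume j: "j \<in> {1..N}"
      then have "V1 j = U1 j 0" using init by (simp add: U1_def ext_def)
      then show "matvec N (M_h N) V1 j \<bullet> V1 j = ((h/4) *\<^sub>R (U1 (j-1) 0 + 2 *\<^sub>R U1 j 0 + U1 (j+1) 0)) \<bullet> U1 j 0"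
        using j by (simp add: matvec_M e1 h_def)
    qed simp
    also have "\<dots> = (h/4) * (\<Sum>j=1..N. (U1 (j-1) 0 + 2 *\<^sub>R U1 j 0 + U1 (j+1) 0) \<bullet> U1 j 0)"
      by (simp add: sum_distrib_left)
    also have "\<dots> = (h/4) * (\<Sum>k\<le>N. (U1 k 0 + U1 (k+1) 0) \<bullet> (U1 k 0 + U1 (k+1) 0))"
      using sbp_M'[of "\<lambda>k. U1 k 0" N "\<lambda>k. U1 k 0"] by simp
    also have "\<dots> = h * (\<Sum>k\<le>N. (norm (vv k 0))\<^sup>2)"
      by (simp add: vv_def sum_distrib_left power_divide power2_norm_eq_inner)
    finally show ?thesis .
  qed
  show ?thesis
    unfolding n1 K L M by (simp add: E_def S_def e_def sum.distrib algebra_simps)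
qed

end

context sol begin

definition "bb k = (h/2)*(e (k-1) 0 + e k 0 + e (k-1) T + e k T)"

lemma Q_nonneg: "Q k \<ge> 0"
  using has_integral_nonneg[OF int_e] e_nonneg by blast

lemma bb_nonneg: "bb k \<ge> 0"
  using h_pos e_nonneg by (simp add: bb_def)

lemma step:
  assumes k: "1 \<le> k" "k \<le> N"
  shows "Q k \<le> Q (k-1) + bb k + h*(B*(1+B))*(h*(\<Sum>i<k. Q i)) + (h/2)*(Q (k-1) + Q k)"
proof -
  define c where "c = B*(1+B)"
  have c0: "c \<ge> 0" using B0 by (simp add: c_def)
  have id: "Q k = Q (k-1) + 2*h*ak k*RR k + 2*h*(D k T - D k 0)" using Q_id[OF k] by simp
  have d: "2*h*(D k T - D k 0) \<le> bb k"
  proof -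
    have "D k T - D k 0 \<le> \<bar>D k T\<bar> + \<bar>D k 0\<bar>" by linarith
    then have "2*h*(D k T - D k 0) \<le> 2*h*(\<bar>D k T\<bar> + \<bar>D k 0\<bar>)"
      using h_pos by (intro mult_left_mono) auto
    then have "2*h*(D k T - D k 0) \<le> 2*h*\<bar>D k T\<bar> + 2*h*\<bar>D k 0\<bar>"
      by (simp add: distrib_left)
    also have "\<dots> \<le> (h/2)*(e (k-1) T + e k T) + (h/2)*(e (k-1) 0 + e k 0)"
      using bound_D[OF k(1), of T] bound_D[OF k(1), of 0] by linarith
    finally show ?thesis by (simp add: bb_def algebra_simps)
  qed
  have r: "2*h*ak k*RR k \<le> h*c*(h*(\<Sum>i<k. Q i)) + (h/2)*(Q (k-1) + Q k)"
  proof (rule has_integral_le)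
    show "((\<lambda>t. (2*h*ak k) * (U k t \<bullet> W k t)) has_integral (2*h*ak k*RR k)) {0..T}"
      by (intro has_integral_mult_right int_R)
    show "((\<lambda>t. h*c*(h*(\<Sum>i<k. e i t)) + (h/2)*(e (k-1) t + e k t)) has_integral
          (h*c*(h*(\<Sum>i<k. Q i)) + (h/2)*(Q (k-1) + Q k))) {0..T}"
      by (intro has_integral_add has_integral_mult_right has_integral_sum int_e) auto
    fix t assume "t \<in> {0..T}"
    have "h*c*(norm (U k t))\<^sup>2 \<le> h*c*(h*(\<Sum>i<k. e i t))"
      using bound_U[of k t] k h_pos c0 by (intro mult_left_mono) auto
    then show "(2*h*ak k) * (U k t \<bullet> W k t) \<le> h*c*(h*(\<Sum>i<k. e i t)) + (h/2)*(e (k-1) t + e k t)"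
      using bound_R[OF k, of t] unfolding c_def by linarith
  qed
  show ?thesis using id d r unfolding c_def by linarith
qed

lemma S_E: "t \<in> {0..T} \<Longrightarrow> S t \<le> E 0"
  using E_const[of t] P_nonneg[of t] by (simp add: E_def)

lemma E0_nonneg: "E 0 \<ge> 0"
  using S_nonneg P_nonneg by (simp add: E_def add_nonneg_nonneg)

lemma main_ineq:
  "T / (1+B) * E 0 \<le> exp (2 + 2*(B*(1+B))) * (Q 0 + 4 * E 0)"
proof -
  define \<gamma> where "\<gamma> = 2 + 2*(B*(1+B))"
  have hN1: "h * (real N + 1) \<le> 1" using hN by simp
  have G: "Q k \<le> exp \<gamma> * (Q 0 + 2*(\<Sum>j=1..k. bb j))" if "k \<le> N" for k
    unfolding \<gamma>_def
    by (rule gronwall[OF h_pos hN1 _ Q_nonneg bb_nonneg step that]) (use B0 in auto)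
  have sb: "(\<Sum>j=1..N. bb j) \<le> 2 * E 0"
  proof -
    have "(\<Sum>j=1..N. bb j) = (\<Sum>j=1..N. (h/2)*(e (j-1) 0 + e j 0) + (h/2)*(e (j-1) T + e j T))"
      by (rule sum.cong) (simp_all add: bb_def algebra_simps)
    also have "\<dots> = (\<Sum>j=1..N. (h/2)*(e (j-1) 0 + e j 0)) + (\<Sum>j=1..N. (h/2)*(e (j-1) T + e j T))"
      by (rule sum.distrib)
    also have "\<dots> \<le> S 0 + S T" using sum_b_le[of 0] sum_b_le[of T] by linarith
    also have "\<dots> \<le> E 0 + E 0" using S_E[of 0] S_E[of T] Tpos by auto
    finally show ?thesis by simp
  qed
  have Qb: "Q k \<le> exp \<gamma> * (Q 0 + 4 * E 0)" if "k \<le> N" for k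
  proof -
    have "(\<Sum>j=1..k. bb j) \<le> (\<Sum>j=1..N. bb j)" using that bb_nonneg by (intro sum_mono2) auto
    then have "Q 0 + 2*(\<Sum>j=1..k. bb j) \<le> Q 0 + 4 * E 0" using sb by linarith
    then have "exp \<gamma> * (Q 0 + 2*(\<Sum>j=1..k. bb j)) \<le> exp \<gamma> * (Q 0 + 4 * E 0)" by simp
    then show ?thesis using G[OF that] by linarith
  qed
  have intS: "(S has_integral (h * (\<Sum>k\<le>N. Q k))) {0..T}"
    unfolding S_def[abs_def] by (intro has_integral_mult_right has_integral_sum int_e) auto
  have up: "h * (\<Sum>k\<le>N. Q k) \<le> exp \<gamma> * (Q 0 + 4 * E 0)"
  proof -
    have "(\<Sum>k\<le>N. Q k) \<le> (\<Sum>k\<le>N. exp \<gamma> * (Q 0 + 4 * E 0))" using Qb by (intro sum_mono) auto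
    also have "\<dots> = (real N + 1) * (exp \<gamma> * (Q 0 + 4 * E 0))" by simp
    finally have "h * (\<Sum>k\<le>N. Q k) \<le> h * ((real N + 1) * (exp \<gamma> * (Q 0 + 4 * E 0)))"
      using h_pos by (intro mult_left_mono) auto
    also have "\<dots> = exp \<gamma> * (Q 0 + 4 * E 0)" using hN by (simp add: mult.assoc[symmetric])
    finally show ?thesis .
  qed
  have low: "T * (E 0 / (1+B)) \<le> h * (\<Sum>k\<le>N. Q k)"
  proof (rule has_integral_le)
    show "((\<lambda>t. E 0 / (1+B)) has_integral (T * (E 0 / (1+B)))) {0..T}"
      using has_integral_const_real[of "E 0 / (1+B)" 0 T] Tpos by simp
    show "(S has_integral (h * (\<Sum>k\<le>N. Q k))) {0..T}" by (rule intS)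
    fix t assume t: "t \<in> {0..T}"
    have "E 0 = S t + P t" using E_const[OF t] by (simp add: E_def)
    also have "\<dots> \<le> (1+B) * S t" using P_le[of t] by (simp add: algebra_simps)
    finally show "E 0 / (1+B) \<le> S t" using B0 by (simp add: field_simps)
  qed
  show ?thesis using up low unfolding \<gamma>_def by (simp add: mult.commute)
qed

lemma integrand_eq:
  "(\<lambda>t. (cmod (u 1 t / complex_of_real (mesh N)))\<^sup>2 + (cmod (u' 1 t / 2))\<^sup>2) = e 0"
proof
  fix t
  have "U (Suc 0) t = u 1 t" "U1 (Suc 0) t = u' 1 t" using N1 by (simp_all add: U_def U1_def ext_def)
  then show "(cmod (u 1 t / complex_of_real (mesh N)))\<^sup>2 + (cmod (u' 1 t / 2))\<^sup>2 = e 0 t"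
    using h_pos by (simp add: e_def vv_def ww_def h_def norm_divide)
qed

end

theorem final:
  fixes a :: "real \<Rightarrow> real"
  assumes meas: "a \<in> borel_measurable (restrict_space lborel {0..1})"
    and bdd: "\<exists>B. \<forall>x\<in>{0..1}. a x \<le> B"
    and nonneg: "\<forall>x\<in>{0..1}. 0 \<le> a x"
  shows "\<exists>T0 > 0. \<exists>\<kappa>0 > 0. \<forall>N \<ge> 1. \<forall>T > T0.
    \<forall>(U0 :: nat \<Rightarrow> complex) (U1 :: nat \<Rightarrow> complex)
     (u :: nat \<Rightarrow> real \<Rightarrow> complex) (u' :: nat \<Rightarrow> real \<Rightarrow> complex) (u'' :: nat \<Rightarrow> real \<Rightarrow> complex).
      (\<forall>j\<in>{1..N}. \<forall>t\<in>{0..T}.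
          (u j has_vector_derivative u' j t) (at t within {0..T}) \<and>
          (u' j has_vector_derivative u'' j t) (at t within {0..T})) \<and>
      (\<forall>t\<in>{0<..<T}. \<forall>i\<in>{1..N}.
          matvec N (M_h N) (\<lambda>j. u'' j t) i
          + matvec N (K_h N) (\<lambda>j. u j t) i
          + matvec N (L_h a N) (\<lambda>j. u j t) i = 0) \<and>
      (\<forall>j\<in>{1..N}. u j 0 = U0 j \<and> u' j 0 = U1 j)
      \<longrightarrow> integral {0..T} (\<lambda>t. (cmod (u 1 t / complex_of_real (mesh N)))\<^sup>2 + (cmod (u' 1 t / 2))\<^sup>2)
          \<ge> \<kappa>0 * (norm1_sq a N U0 + normM_sq N U1)"
proof -
  obtain B1 where B1: "\<forall>x\<in>{0..1}. a x \<le> B1" using bdd by blast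
  define B where "B = max B1 0"
  have B0: "B \<ge> 0" and aB: "\<forall>x\<in>{0..1}. a x \<le> B" using B1 by (auto simp: B_def)
  define \<gamma> where "\<gamma> = 2 + 2*(B*(1+B))"
  define T0 where "T0 = (1+B)*(4*exp \<gamma> + 1)"
  have T0pos: "T0 > 0" using B0 by (simp add: T0_def add_pos_nonneg)
  have kpos: "exp (-\<gamma>) > 0" by simp
  show ?thesis
  proof (rule exI[of _ T0], intro conjI T0pos, rule exI[of _ "exp (-\<gamma>)"], intro conjI kpos allI impI)
    fix N :: nat and T :: real and U0 U1 :: "nat \<Rightarrow> complex" and u u' u'' :: "nat \<Rightarrow> real \<Rightarrow> complex"
    assume N: "1 \<le> N" and T: "T0 < T"
    assume H: "(\<forall>j\<in>{1..N}. \<forall>t\<in>{0..T}.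
          (u j has_vector_derivative u' j t) (at t within {0..T}) \<and>
          (u' j has_vector_derivative u'' j t) (at t within {0..T})) \<and>
      (\<forall>t\<in>{0<..<T}. \<forall>i\<in>{1..N}.
          matvec N (M_h N) (\<lambda>j. u'' j t) i
          + matvec N (K_h N) (\<lambda>j. u j t) i
          + matvec N (L_h a N) (\<lambda>j. u j t) i = 0) \<and>
      (\<forall>j\<in>{1..N}. u j 0 = U0 j \<and> u' j 0 = U1 j)"
    interpret S: sol a B N T u u' u''
      using N T T0pos B0 aB nonneg H by unfold_locales auto
    have ie: "norm1_sq a N U0 + normM_sq N U1 = S.E 0" using H by (intro S.init_energy) auto
    have ig: "integral {0..T} (\<lambda>t. (cmod (u 1 t / complex_of_real (mesh N)))\<^sup>2 + (cmod (u' 1 t / 2))\<^sup>2) = S.Q 0"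
      unfolding S.integrand_eq S.Q_def ..
    have mi: "T / (1+B) * S.E 0 \<le> exp \<gamma> * (S.Q 0 + 4 * S.E 0)"
      using S.main_ineq unfolding \<gamma>_def .
    have E0: "S.E 0 \<ge> 0" by (rule S.E0_nonneg)
    have "4 * exp \<gamma> + 1 < T / (1+B)" using T B0 by (simp add: T0_def field_simps)
    then have "(4 * exp \<gamma> + 1) * S.E 0 \<le> T / (1+B) * S.E 0" using E0 by (intro mult_right_mono) auto
    then have "S.E 0 \<le> exp \<gamma> * S.Q 0" using mi by (simp add: algebra_simps)
    then have "exp (-\<gamma>) * S.E 0 \<le> exp (-\<gamma>) * (exp \<gamma> * S.Q 0)" by (intro mult_left_mono) auto
    also have "\<dots> = S.Q 0" by (simp add: exp_minus field_simps)
    finally have fin: "exp (-\<gamma>) * S.E 0 \<le> S.Q 0" .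
    then show "exp (-\<gamma>) * (norm1_sq a N U0 + normM_sq N U1)
      \<le> integral {0..T} (\<lambda>t. (cmod (u 1 t / complex_of_real (mesh N)))\<^sup>2 + (cmod (u' 1 t / 2))\<^sup>2)"
      using ie ig by simp
  qed
qed

theorem theorem1:
  fixes a :: "real \<Rightarrow> real"
  assumes meas: "a \<in> borel_measurable (restrict_space lborel {0..1})"
    and bdd: "\<exists>B. \<forall>x\<in>{0..1}. a x \<le> B"
    and nonneg: "\<forall>x\<in>{0..1}. 0 \<le> a x"
  shows "\<exists>T0 > 0. \<exists>\<kappa>0 > 0. \<forall>N \<ge> 1. \<forall>T > T0.
    \<forall>(U0 :: nat \<Rightarrow> complex) (U1 :: nat \<Rightarrow> complex)
     (u :: nat \<Rightarrow> real \<Rightarrow> complex) (u' :: nat \<Rightarrow> real \<Rightarrow> complex) (u'' :: nat \<Rightarrow> real \<Rightarrow> complex).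
      (\<forall>j\<in>{1..N}. \<forall>t\<in>{0..T}.
          (u j has_vector_derivative u' j t) (at t within {0..T}) \<and>
          (u' j has_vector_derivative u'' j t) (at t within {0..T})) \<and>
      (\<forall>t\<in>{0<..<T}. \<forall>i\<in>{1..N}.
          matvec N (M_h N) (\<lambda>j. u'' j t) i
          + matvec N (K_h N) (\<lambda>j. u j t) i
          + matvec N (L_h a N) (\<lambda>j. u j t) i = 0) \<and>
      (\<forall>j\<in>{1..N}. u j 0 = U0 j \<and> u' j 0 = U1 j)
      \<longrightarrow> integral {0..T} (\<lambda>t. (cmod (u 1 t / complex_of_real (mesh N)))\<^sup>2 + (cmod (u' 1 t / 2))\<^sup>2)
          \<ge> \<kappa>0 * (norm1_sq a N U0 + normM_sq N U1)"
    by (rule final[OF meas bdd nonneg])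

end
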